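(* Let $t\geqslant 1$ and $k$ be integers with $1\leqslant k\leqslant \frac{2t+1}{3}$. Then $$\sum_{j=0}^{k-1}\binom{2t+1-3k}{t-1-3j}\binom{2k}{1+2j}\leqslant 2\binom{2t-2}{t-1}.$$
   Context: Binomial convention: $\binom{0}{0}=1$ and $\binom{p}{q}=0$ whenever $q<0$, $p<0$ or $p<q$. *)

theory Defs
  imports Main
begin

definition binomZ :: "int \<Rightarrow> int \<Rightarrow> int" where
  "binomZ p q = (if q < 0 \<or> p < 0 \<or> p < q then 0 else int (nat p choose nat q))"

end

theory Submission imports Defs Complex_Main begin
definition cen :: "nat \<Rightarrow> nat" where "cen m = m choose (m div 2)"

lemma cen_odd: "cen (Suc (2*a)) * (a+1) = (2*a+1) * cen (2*a)"
proof -
  have "Suc (2*a) * (2*a choose a) = (Suc (2*a) choose Suc a) * Suc a" by (rule Suc_times_binomial_eq)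
  moreover have "(Suc (2*a) choose Suc a) = (Suc (2*a) choose a)"
    using binomial_symmetric[of a "Suc (2*a)"] by simp
  ultimately show ?thesis unfolding cen_def by simp
qed

lemma cen_even: "cen (2*a+2) = 2 * cen (2*a+1)"
proof -
  have "(2*a+2) choose (a+1) = (2*a+1 choose a) + (2*a+1 choose (a+1))"
    using binomial_Suc_Suc[of "2*a+1" a] by simp
  moreover have "(2*a+1 choose (a+1)) = (2*a+1 choose a)"
    using binomial_symmetric[of a "2*a+1"] by simp
  ultimately show ?thesis unfolding cen_def by simp
qed

lemma cen_step: assumes "n \<ge> 1" shows "4 * cen n \<le> cen (n+3)"
proof (cases "even n")
  case True
  then obtain a where a: "n = 2*a" by blast
  with assms have a1: "a \<ge> 1" by simp
  have e1: "cen (2*a+3) * (a+2) = (2*a+3) * cen (2*a+2)"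
  proof -
    have q1: "Suc (2*(a+1)) = 2*a+3" and q2: "2*(a+1) = 2*a+2" and q3: "a+1+1 = a+2" and q4: "2*(a+1)+1 = 2*a+3" by simp_all
    have q5: "Suc (2*a+2) = 2*a+3" and q6: "2*a+2+1 = 2*a+3" by simp_all
    show ?thesis using cen_odd[of "a+1", unfolded q1 q2 q3 q4 q5 q6] .
  qed
  have e2: "cen (2*a+2) = 2 * cen (2*a+1)" by (rule cen_even)
  have e3: "cen (2*a+1) * (a+1) = (2*a+1) * cen (2*a)" using cen_odd[of a] by simp
  have "cen (2*a+3) * (a+2) * (a+1) = 2*(2*a+3)*(2*a+1) * cen (2*a)"
    using e1 e2 e3 by (metis mult.assoc mult.commute)
  moreover have "2*(a+1)*(a+2) \<le> (2*a+3)*(2*a+1)"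
  proof -
    have "a \<le> a*a" using a1 by simp
    thus ?thesis using a1 by (simp add: algebra_simps)
  qed
  ultimately have "4 * cen (2*a) * ((a+2)*(a+1)) \<le> cen (2*a+3) * ((a+2)*(a+1))"
    by (smt (verit) mult.assoc mult.commute mult_le_mono1 numeral_Bit0 mult_2)
  hence "4 * cen (2*a) \<le> cen (2*a+3)" by (simp only: mult_le_cancel2) simp
  then show ?thesis using a by (simp add: add.commute)
next
  case False
  then obtain a where a: "n = 2*a+1" using oddE by blast
  have e1: "cen (2*a+3) * (a+2) = (2*a+3) * cen (2*a+2)"
  proof -
    have q1: "Suc (2*(a+1)) = 2*a+3" and q2: "2*(a+1) = 2*a+2" and q3: "a+1+1 = a+2" and q4: "2*(a+1)+1 = 2*a+3" by simp_all
    have q5: "Suc (2*a+2) = 2*a+3" and q6: "2*a+2+1 = 2*a+3" by simp_all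
    show ?thesis using cen_odd[of "a+1", unfolded q1 q2 q3 q4 q5 q6] .
  qed
  have "cen (2*a+4) = 2 * cen (2*a+3)"
  proof -
    have q1: "2*(a+1)+2 = 2*a+4" and q2: "2*(a+1)+1 = 2*a+3" by simp_all
    show ?thesis using cen_even[of "a+1", unfolded q1 q2] .
  qed
  hence "cen (2*a+4) * (a+2) = 2 * (cen (2*a+3) * (a+2))" by simp
  also have "\<dots> = 2 * ((2*a+3) * cen (2*a+2))" using e1 by simp
  also have "\<dots> = 2 * ((2*a+3) * (2 * cen (2*a+1)))" using cen_even[of a] by simp
  finally have "cen (2*a+4) * (a+2) = 4*(2*a+3) * cen (2*a+1)" by simp
  moreover have "4 * cen (2*a+1) * (a+2) \<le> 4*(2*a+3) * cen (2*a+1)"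
  proof -
    have "a+2 \<le> 2*a+3" by simp
    hence "4 * cen (2*a+1) * (a+2) \<le> 4 * cen (2*a+1) * (2*a+3)" by (rule mult_le_mono2)
    thus ?thesis by (simp only: mult.commute mult.left_commute)
  qed
  ultimately have "4 * cen (2*a+1) * (a+2) \<le> cen (2*a+4) * (a+2)" by simp
  hence "4 * cen (2*a+1) \<le> cen (2*a+4)" by (simp only: mult_le_cancel2)
  then show ?thesis using a by (simp add: add.commute)
qed

lemma cen_pow_pos: assumes "n \<ge> 1" shows "4^m * cen n \<le> cen (n+3*m)"
proof (induction m)
  case 0 then show ?case by simp
next
  case (Suc m)
  have "4^Suc m * cen n = 4 * (4^m * cen n)" by simp
  also have "\<dots> \<le> 4 * cen (n+3*m)" using Suc by simp
  also have "\<dots> \<le> cen (n+3*m+3)" using cen_step assms by simp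
  finally show ?case by (simp add: algebra_simps)
qed

lemma cen_pow: assumes "even (n+3*m)" shows "4^m * cen n \<le> cen (n+3*m)"
proof (cases "n \<ge> 1")
  case True then show ?thesis by (rule cen_pow_pos)
next
  case False
  hence n0: "n = 0" by simp
  show ?thesis
  proof (cases "m = 0")
    case True then show ?thesis using n0 by simp
  next
    case False
    with assms n0 have "m \<ge> 2" by presburger
    then obtain r where r: "m = r + 2" using le_Suc_ex by (metis add.commute)
    have c6: "cen 6 = 20" unfolding cen_def by code_simp
    have "4^m * cen n = 16 * 4^r" using r n0 by (simp add: cen_def power_add)
    also have "\<dots> \<le> 4^r * cen 6" using c6 by simp
    also have "\<dots> \<le> cen (6 + 3*r)" by (rule cen_pow_pos) simp
    finally show ?thesis using r n0 by (simp add: algebra_simps)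
  qed
qed
lemma binomZ_le_cen: "binomZ p q \<le> int (cen (nat p))"
  unfolding binomZ_def cen_def using binomial_maximum[of "nat p" "nat q"] by auto

lemma binomZ_nonneg: "binomZ p q \<ge> 0"
  unfolding binomZ_def by auto

lemma odd_sum_bound:
  fixes k :: int assumes "k \<ge> 1"
  shows "2 * (\<Sum>j\<in>{0..k-1}. binomZ (2*k) (1+2*j)) \<le> 2 ^ (2 * nat k)"
proof -
  define K where "K = nat k"
  define g where "g = (\<lambda>j::int. nat (1+2*j))"
  have inj: "inj_on g {0..k-1}" unfolding g_def inj_on_def by auto
  have sub: "g ` {0..k-1} \<subseteq> {i. i \<le> 2*K \<and> odd i}"
  proof
    fix i assume "i \<in> g ` {0..k-1}"
    then obtain j where j: "j \<in> {0..k-1}" "i = nat (1+2*j)" unfolding g_def by auto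
    hence "i \<le> 2*K" unfolding K_def by auto
    moreover have "odd i"
    proof -
      have "i = 1 + 2 * nat j" using j by auto
      thus ?thesis by simp
    qed
    ultimately show "i \<in> {i. i \<le> 2*K \<and> odd i}" by simp
  qed
  have "(\<Sum>j\<in>{0..k-1}. binomZ (2*k) (1+2*j)) = (\<Sum>j\<in>{0..k-1}. int (2*K choose g j))"
  proof (rule sum.cong)
    fix j assume "j \<in> {0..k-1}"
    thus "binomZ (2*k) (1+2*j) = int (2*K choose g j)"
      unfolding binomZ_def g_def K_def using assms by (auto simp: nat_mult_distrib)
  qed simp
  also have "\<dots> = (\<Sum>i\<in>g ` {0..k-1}. int (2*K choose i))"
    using sum.reindex[OF inj, of "\<lambda>i. int (2*K choose i)"] by simp
  also have "\<dots> \<le> (\<Sum>i\<in>{i. i \<le> 2*K \<and> odd i}. int (2*K choose i))"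
    by (rule sum_mono2) (use sub in auto)
  also have "\<dots> = (\<Sum>i\<le>2*K. if odd i then int (2*K choose i) else 0)"
  proof -
    have "{i. i \<le> 2*K \<and> odd i} = {..2*K} \<inter> {i. odd i}" by auto
    thus ?thesis by (simp add: sum.inter_restrict)
  qed
  finally have "2 * (\<Sum>j\<in>{0..k-1}. binomZ (2*k) (1+2*j)) \<le> 2 * (\<Sum>i\<le>2*K. if odd i then int (2*K choose i) else 0)"
    by simp
  also have "\<dots> = 2 ^ (2*K)" using choose_odd_sum[of "2*K"] assms unfolding K_def by simp
  finally show ?thesis unfolding K_def .
qed

theorem lemma5:
  fixes t k :: int
  assumes "t \<ge> 1" and "1 \<le> k" and "3 * k \<le> 2 * t + 1"
  shows "(\<Sum>j\<in>{0..k-1}. binomZ (2*t+1-3*k) (t-1-3*j) * binomZ (2*k) (1+2*j))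
           \<le> 2 * binomZ (2*t-2) (t-1)"
proof -
  define N where "N = nat (2*t+1-3*k)"
  define K where "K = nat k"
  define T where "T = nat t"
  define B where "B = (\<Sum>j\<in>{0..k-1}. binomZ (2*k) (1+2*j))"
  have "(\<Sum>j\<in>{0..k-1}. binomZ (2*t+1-3*k) (t-1-3*j) * binomZ (2*k) (1+2*j))
        \<le> (\<Sum>j\<in>{0..k-1}. int (cen N) * binomZ (2*k) (1+2*j))"
    by (rule sum_mono, rule mult_right_mono) (use binomZ_le_cen binomZ_nonneg N_def in auto)
  also have "\<dots> = int (cen N) * B" unfolding B_def by (simp add: sum_distrib_left)
  finally have S: "(\<Sum>j\<in>{0..k-1}. binomZ (2*t+1-3*k) (t-1-3*j) * binomZ (2*k) (1+2*j)) \<le> int (cen N) * B" .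
  have B2: "2 * B \<le> 2 ^ (2*K)" unfolding B_def K_def using odd_sum_bound assms(2) by blast
  have NK: "N + 3*(K-1) = 2*T-2" unfolding N_def K_def T_def using assms by auto
  have ev: "even (N + 3*(K-1))" using NK by simp
  have cp: "4^(K-1) * cen N \<le> cen (2*T-2)" using cen_pow[OF ev] NK by simp
  have rhs: "binomZ (2*t-2) (t-1) = int (cen (2*T-2))"
  proof -
    have "(2*T-2) div 2 = T-1" by simp
    moreover have "nat (2*t-2) = 2*T-2" "nat (t-1) = T-1" unfolding T_def using assms by auto
    ultimately show ?thesis unfolding binomZ_def cen_def using assms by auto
  qed
  have K1: "K \<ge> 1" unfolding K_def using assms by simp
  have "2 ^ (2*K) = (4::int) * 4^(K-1)"
  proof -
    have "(2::int) ^ (2*K) = 4 ^ K" by (simp add: power_mult)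
    also have "\<dots> = 4 * 4^(K-1)" using K1 by (metis Suc_diff_1 less_le_trans zero_less_one power_Suc)
    finally show ?thesis .
  qed
  hence "2 * (int (cen N) * B) \<le> int (cen N) * (4 * 4^(K-1))"
    using B2 by (metis mult.left_commute mult_left_mono of_nat_0_le_iff)
  also have "\<dots> = 4 * int (4^(K-1) * cen N)" by simp
  also have "\<dots> \<le> 4 * int (cen (2*T-2))"
  proof -
    have "int (4^(K-1) * cen N) \<le> int (cen (2*T-2))" using cp by (simp only: of_nat_le_iff)
    thus ?thesis by linarith
  qed
  finally show ?thesis using S rhs by linarith
qed
end
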